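(* Let $G_1$ ($n\times k$) and $G_0$ ($n\times l$) be fixed binary matrices with $\widetilde G=[G_1\ G_0]$ of full column rank, let $\mathbf m\in\{0,1\}^k$ be fixed, and let $t_1=\lfloor (d_1-1)/2\rfloor$. On the binary defect and symmetric channel with two-step encoding and any decoder satisfying the bounded-distance property described in the context, $$P(\widehat{\mathbf m}\neq\mathbf m)\le\sum_{u=d_0}^{n}\left\{\binom nu\beta^u(1-\beta)^{n-u}\min\left\{\frac{\sum_{w=d_0}^{u}B_{0,w}\binom{n-w}{u-w}}{\binom nu},1\right\}\sum_{t=\max(0,\,t_1+d_0-u)}^{n}\binom nt p^t(1-p)^{n-t}\right\}+\sum_{t=t_1+1}^{n}\binom nt p^t(1-p)^{n-t}.$$
   Context: All arithmetic is over $\mathrm{GF}(2)$. $\mathcal C_0^{\perp}=\{\mathbf x\in\{0,1\}^n: G_0^T\mathbf x=\mathbf 0\}$; $B_{0,w}$ is its number of vectors of Hamming weight $w$ and $d_0$ its minimum nonzero weight. $d_1$ is the minimum Hamming weight of $G_1\mathbf m'+G_0\mathbf d'$ over all $\mathbf m'\neq\mathbf 0$, $\mathbf d'\in\{0,1\}^l$. Binary defect and symmetric channel (BDSC) with parameters $(\beta,p)$: each of the $n$ cells is independently defective with probability $\beta$; a defective cell is stuck at $0$ or $1$, each with probability $1/2$, independently; $\mathcal U$ is the set of defects, $U=|\mathcal U|$, $\mathbf s$ the stuck-at values. Writing codeword $\mathbf c$ stores $\mathbf c\circ\mathbf s$, where $(\mathbf c\circ\mathbf s)_i=s_i$ for $i\in\mathcal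 U$ and $c_i$ otherwise; the read vector is $\mathbf y=\mathbf c\circ\mathbf s+\mathbf z$, with $\mathbf z$ having i.i.d. $\mathrm{Bernoulli}(p)$ entries independent of the defects. For a matrix/vector, superscript $\mathcal A$ denotes the rows indexed by $\mathcal A$. Two-step encoding: let $\mathbf b^{\mathcal U}=(G_1\mathbf m)^{\mathcal U}+\mathbf s^{\mathcal U}$. Step 1: if $G_0^{\mathcal U}\mathbf d=\mathbf b^{\mathcal U}$ has a solution $\mathbf d$, use it ($E=1$). Otherwise ($E=0$; this requires $U\ge d_0$), Step 2: choose any $\mathcal U'\subseteq\mathcal U$ with $|\mathcal U'|=d_0-1$ and take $\mathbf d$ solving $G_0^{\mathcal U'}\mathbf d=\mathbf b^{\mathcal U'}$ (such a solution always exists since any $d_0-1$ rows of $G_0$ are linearly independent). The stored codeword is $\mathbf c=G_1\mathbf m+G_0\mathbf d$. Decoder: any map $\mathbf y\mapsto\widehat{\mathbf m}$ such that $\widehat{\mathbf m}=\mathbf m$ whenever $\mathbf y$ and $\mathbf c$ differ in at most $t_1$ positions (e.g. bounded-distance decoding of the code generated by $\widetilde G$). *)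

theory Defs
  imports Complex_Main "HOL-Library.Z2"
begin

text \<open>Binary n x k matrices: functions nat => nat => bit (only entries i<n, j<k are used).\<close>

definition vecs :: "nat \<Rightarrow> (nat \<Rightarrow> bit) set" where
  "vecs n = {x. \<forall>i\<ge>n. x i = 0}"

definition mv :: "(nat \<Rightarrow> nat \<Rightarrow> bit) \<Rightarrow> nat \<Rightarrow> (nat \<Rightarrow> bit) \<Rightarrow> (nat \<Rightarrow> bit)" where
  "mv G k x = (\<lambda>i. \<Sum>j<k. G i j * x j)"

definition hw :: "nat \<Rightarrow> (nat \<Rightarrow> bit) \<Rightarrow> nat" where
  "hw n x = card {i. i < n \<and> x i \<noteq> 0}"

definition hdist :: "nat \<Rightarrow> (nat \<Rightarrow> bit) \<Rightarrow> (nat \<Rightarrow> bit) \<Rightarrow> nat" where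
  "hdist n x y = card {i. i < n \<and> x i \<noteq> y i}"

definition full_col_rank :: "nat \<Rightarrow> nat \<Rightarrow> nat \<Rightarrow> (nat \<Rightarrow> nat \<Rightarrow> bit) \<Rightarrow> (nat \<Rightarrow> nat \<Rightarrow> bit) \<Rightarrow> bool" where
  "full_col_rank n k l G1 G0 \<longleftrightarrow>
     (\<forall>m'\<in>vecs k. \<forall>d'\<in>vecs l.
        (\<forall>i<n. mv G1 k m' i + mv G0 l d' i = 0) \<longrightarrow> m' = (\<lambda>_. 0) \<and> d' = (\<lambda>_. 0))"

definition C0perp :: "nat \<Rightarrow> nat \<Rightarrow> (nat \<Rightarrow> nat \<Rightarrow> bit) \<Rightarrow> (nat \<Rightarrow> bit) set" where
  "C0perp n l G0 = {x \<in> vecs n. \<forall>j<l. (\<Sum>i<n. G0 i j * x i) = 0}"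

definition B0 :: "nat \<Rightarrow> nat \<Rightarrow> (nat \<Rightarrow> nat \<Rightarrow> bit) \<Rightarrow> nat \<Rightarrow> nat" where
  "B0 n l G0 w = card {x \<in> C0perp n l G0. hw n x = w}"

text \<open>Minimum nonzero weight of C0^perp (convention: n+1, i.e. "infinity", if C0^perp = {0}).\<close>
definition dmin0 :: "nat \<Rightarrow> nat \<Rightarrow> (nat \<Rightarrow> nat \<Rightarrow> bit) \<Rightarrow> nat" where
  "dmin0 n l G0 = (let S = {hw n x | x. x \<in> C0perp n l G0 \<and> x \<noteq> (\<lambda>_. 0)}
                   in if S = {} then n + 1 else Min S)"

text \<open>d1 = min weight of G1 m' + G0 d' over m' \<noteq> 0 (convention: 2n+1 if k = 0).\<close>
definition dmin1 :: "nat \<Rightarrow> nat \<Rightarrow> nat \<Rightarrow> (nat \<Rightarrow> nat \<Rightarrow> bit) \<Rightarrow> (nat \<Rightarrow> nat \<Rightarrow> bit) \<Rightarrow> nat" where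
  "dmin1 n k l G1 G0 = (let S = {hw n (\<lambda>i. mv G1 k m' i + mv G0 l d' i) | m' d'.
                                   m' \<in> vecs k \<and> m' \<noteq> (\<lambda>_. 0) \<and> d' \<in> vecs l}
                        in if S = {} then 2 * n + 1 else Min S)"

text \<open>Stuck-at value vectors for defect set U (values outside U are irrelevant, fixed to 0).\<close>
definition stucks :: "nat \<Rightarrow> nat set \<Rightarrow> (nat \<Rightarrow> bit) set" where
  "stucks n U = {s \<in> vecs n. \<forall>i. i \<notin> U \<longrightarrow> s i = 0}"

definition two_step_encoder ::
  "nat \<Rightarrow> nat \<Rightarrow> nat \<Rightarrow> (nat \<Rightarrow> nat \<Rightarrow> bit) \<Rightarrow> (nat \<Rightarrow> nat \<Rightarrow> bit) \<Rightarrow> (nat \<Rightarrow> bit)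
     \<Rightarrow> (nat set \<Rightarrow> (nat \<Rightarrow> bit) \<Rightarrow> (nat \<Rightarrow> bit)) \<Rightarrow> bool" where
  "two_step_encoder n k l G1 G0 m enc \<longleftrightarrow>
     (\<forall>U s. U \<subseteq> {..<n} \<longrightarrow> s \<in> stucks n U \<longrightarrow>
        (let b = (\<lambda>i. mv G1 k m i + s i); d = enc U s in
          d \<in> vecs l \<and>
          (if (\<exists>d'\<in>vecs l. \<forall>i\<in>U. mv G0 l d' i = b i)
           then (\<forall>i\<in>U. mv G0 l d i = b i)
           else (\<exists>U'\<subseteq>U. card U' = dmin0 n l G0 - 1 \<and> (\<forall>i\<in>U'. mv G0 l d i = b i)))))"

definition codeword :: "nat \<Rightarrow> nat \<Rightarrow> (nat \<Rightarrow> nat \<Rightarrow> bit) \<Rightarrow> (nat \<Rightarrow> nat \<Rightarrow> bit) \<Rightarrow> (nat \<Rightarrow> bit) \<Rightarrow> (nat \<Rightarrow> bit) \<Rightarrow> (nat \<Rightarrow> bit)" where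
  "codeword k l G1 G0 m d = (\<lambda>i. mv G1 k m i + mv G0 l d i)"

definition read_vec :: "nat \<Rightarrow> (nat \<Rightarrow> bit) \<Rightarrow> nat set \<Rightarrow> (nat \<Rightarrow> bit) \<Rightarrow> (nat \<Rightarrow> bit) \<Rightarrow> (nat \<Rightarrow> bit)" where
  "read_vec n c U s z = (\<lambda>i. if i < n then (if i \<in> U then s i else c i) + z i else 0)"

definition bd_decoder ::
  "nat \<Rightarrow> nat \<Rightarrow> nat \<Rightarrow> (nat \<Rightarrow> nat \<Rightarrow> bit) \<Rightarrow> (nat \<Rightarrow> nat \<Rightarrow> bit) \<Rightarrow> nat \<Rightarrow> (nat \<Rightarrow> bit)
     \<Rightarrow> ((nat \<Rightarrow> bit) \<Rightarrow> (nat \<Rightarrow> bit)) \<Rightarrow> bool" where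
  "bd_decoder n k l G1 G0 t1 m dec \<longleftrightarrow>
     (\<forall>d\<in>vecs l. \<forall>y\<in>vecs n. hdist n y (codeword k l G1 G0 m d) \<le> t1 \<longrightarrow> dec y = m)"

text \<open>Probability of decoding error on the BDSC(beta,p), as the exact finite sum over
  defect sets U, stuck values s (uniform on U) and noise vectors z (i.i.d. Bernoulli(p)).\<close>
definition error_prob ::
  "nat \<Rightarrow> nat \<Rightarrow> nat \<Rightarrow> (nat \<Rightarrow> nat \<Rightarrow> bit) \<Rightarrow> (nat \<Rightarrow> nat \<Rightarrow> bit) \<Rightarrow> (nat \<Rightarrow> bit)
     \<Rightarrow> (nat set \<Rightarrow> (nat \<Rightarrow> bit) \<Rightarrow> (nat \<Rightarrow> bit)) \<Rightarrow> ((nat \<Rightarrow> bit) \<Rightarrow> (nat \<Rightarrow> bit))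
     \<Rightarrow> real \<Rightarrow> real \<Rightarrow> real" where
  "error_prob n k l G1 G0 m enc dec \<beta> p =
     (\<Sum>U\<in>Pow {..<n}. \<Sum>s\<in>stucks n U. \<Sum>z\<in>vecs n.
        \<beta> ^ card U * (1 - \<beta>) ^ (n - card U) * (1/2) ^ card U
        * p ^ hw n z * (1 - p) ^ (n - hw n z)
        * (if dec (read_vec n (codeword k l G1 G0 m (enc U s)) U s z) \<noteq> m then 1 else 0))"

end

theory Submission
  imports Defs
begin
declare add_bit_eq_xor[simp del] mult_bit_eq_and[simp del]
lemma bit_cases2: "(a::bit) = 0 \<or> a = 1" by (cases a) auto
lemma bit_add_self[simp]: "(a::bit) + a = 0" by (cases a) auto
lemma bit_add_cancel[simp]: "(a::bit) + (a + b) = b" by (simp only: add.assoc[symmetric] bit_add_self add_0)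

definition ind :: "nat set \<Rightarrow> nat \<Rightarrow> bit" where "ind S = (\<lambda>i. if i \<in> S then 1 else 0)"

lemma inj_ind: "inj ind"
proof (rule injI)
  fix S T assume h: "ind S = ind T"
  show "S = T"
  proof (rule set_eqI)
    fix x have "ind S x = ind T x" using h by simp
    thus "x \<in> S \<longleftrightarrow> x \<in> T" unfolding ind_def by (auto split: if_splits)
  qed
qed

lemma ind_supp: "ind {i. x i \<noteq> 0} = x"
proof (rule ext)
  fix i show "ind {i. x i \<noteq> 0} i = x i" unfolding ind_def using bit_cases2[of "x i"] by auto
qed
lemma vecs_eq: "vecs n = ind ` Pow {..<n}"
proof
  show "vecs n \<subseteq> ind ` Pow {..<n}"
  proof
    fix x assume x: "x \<in> vecs n"
    have "{i. x i \<noteq> 0} \<in> Pow {..<n}" using x unfolding vecs_def by (auto simp: not_le[symmetric])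
    thus "x \<in> ind ` Pow {..<n}" by (metis ind_supp image_eqI)
  qed
  show "ind ` Pow {..<n} \<subseteq> vecs n" unfolding vecs_def ind_def by auto
qed

lemma finite_vecs[simp]: "finite (vecs n)" by (simp add: vecs_eq)

lemma hw_ind: "S \<subseteq> {..<n} \<Longrightarrow> hw n (ind S) = card S"
  unfolding hw_def ind_def by (rule arg_cong[where f=card]) auto

lemma sum_Pow_card:
  fixes f :: "nat \<Rightarrow> 'a::comm_semiring_1"
  assumes "finite A"
  shows "(\<Sum>U\<in>Pow A. f (card U)) = (\<Sum>u\<le>card A. of_nat (card A choose u) * f u)"
proof -
  have "(\<Sum>U\<in>Pow A. f (card U)) = (\<Sum>u\<in>{..card A}. \<Sum>U\<in>{U\<in>Pow A. card U = u}. f (card U))"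
    by (rule sum.group[symmetric]) (use assms in \<open>auto intro: card_mono\<close>)
  also have "\<dots> = (\<Sum>u\<le>card A. of_nat (card A choose u) * f u)"
  proof (rule sum.cong[OF refl])
    fix u
    have "{U\<in>Pow A. card U = u} = {U. U \<subseteq> A \<and> card U = u}" by auto
    hence "card {U\<in>Pow A. card U = u} = card A choose u" using n_subsets[OF assms] by simp
    moreover have "(\<Sum>U\<in>{U\<in>Pow A. card U = u}. f (card U)) = (\<Sum>U\<in>{U\<in>Pow A. card U = u}. f u)"
      by (rule sum.cong) auto
    ultimately show "(\<Sum>U\<in>{U\<in>Pow A. card U = u}. f (card U)) = of_nat (card A choose u) * f u"
      by simp
  qed
  finally show ?thesis .
qed

lemma sum_vecs_hw:
  fixes f :: "nat \<Rightarrow> 'a::comm_semiring_1"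
  shows "(\<Sum>z\<in>vecs n. f (hw n z)) = (\<Sum>t\<le>n. of_nat (n choose t) * f t)"
proof -
  have "(\<Sum>z\<in>vecs n. f (hw n z)) = (\<Sum>S\<in>Pow {..<n}. f (hw n (ind S)))"
    unfolding vecs_eq by (simp add: sum.reindex[OF inj_on_subset[OF inj_ind subset_UNIV]])
  also have "\<dots> = (\<Sum>S\<in>Pow {..<n}. f (card S))" by (rule sum.cong) (auto simp: hw_ind)
  also have "\<dots> = (\<Sum>t\<le>n. of_nat (n choose t) * f t)" by (subst sum_Pow_card) auto
  finally show ?thesis .
qed

lemma stucks_eq: "U \<subseteq> {..<n} \<Longrightarrow> stucks n U = ind ` Pow U"
proof
  assume U: "U \<subseteq> {..<n}"
  show "stucks n U \<subseteq> ind ` Pow U"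
  proof
    fix x assume x: "x \<in> stucks n U"
    have "{i. x i \<noteq> 0} \<in> Pow U" using x unfolding stucks_def by auto
    thus "x \<in> ind ` Pow U" by (metis ind_supp image_eqI)
  qed
  show "ind ` Pow U \<subseteq> stucks n U"
  proof
    fix x assume "x \<in> ind ` Pow U"
    then obtain S where S: "S \<subseteq> U" and x: "x = ind S" by auto
    have "\<forall>i\<ge>n. i \<notin> S" using S U by auto
    moreover have "\<forall>i. i \<notin> U \<longrightarrow> i \<notin> S" using S by auto
    ultimately show "x \<in> stucks n U" unfolding x stucks_def vecs_def ind_def by auto
  qed
qed

lemma card_stucks: "U \<subseteq> {..<n} \<Longrightarrow> card (stucks n U) = 2 ^ card U"
  apply (simp add: stucks_eq)
  apply (subst card_image)
   apply (meson inj_ind inj_on_subset subset_UNIV)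
  using card_Pow finite_subset by (metis finite_lessThan)

lemma finite_stucks: "U \<subseteq> {..<n} \<Longrightarrow> finite (stucks n U)"
  by (simp add: stucks_eq finite_subset[of U "{..<n}"])

lemma vecs_Suc: "d \<in> vecs l \<Longrightarrow> d \<in> vecs (Suc l)" unfolding vecs_def by auto

lemma sum_add_mult: "(\<Sum>i\<in>U. ((f i + g i)::bit) * y i) = (\<Sum>i\<in>U. f i * y i) + (\<Sum>i\<in>U. g i * y i)"
  by (simp add: distrib_right sum.distrib)
lemma sum_mult_add: "(\<Sum>i\<in>U. (f i::bit) * (y i + z i)) = (\<Sum>i\<in>U. f i * y i) + (\<Sum>i\<in>U. f i * z i)"
  by (simp add: distrib_left sum.distrib)
lemma bit_solve: "(a::bit) + c = e \<Longrightarrow> a = e + c"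
  by (metis add.assoc bit_add_self add_0_right)

lemma farkas:
  fixes G :: "nat \<Rightarrow> nat \<Rightarrow> bit"
  assumes fin: "finite U"
  shows "(\<exists>d\<in>vecs l. \<forall>i\<in>U. (\<Sum>j<l. G i j * d j) = b i) \<or>
         (\<exists>y. (\<forall>j<l. (\<Sum>i\<in>U. G i j * y i) = 0) \<and> (\<Sum>i\<in>U. b i * y i) = 1)"
proof (induction l arbitrary: b)
  case 0
  show ?case
  proof (cases "\<forall>i\<in>U. b i = 0")
    case True
    show ?thesis by (rule disjI1, rule bexI[of _ "\<lambda>_. 0"]) (use True in \<open>auto simp: vecs_def\<close>)
  next
    case False
    then obtain a where a: "a \<in> U" "b a = 1" by auto
    let ?y = "\<lambda>i. if i = a then 1 else 0 :: bit"
    have "(\<Sum>i\<in>U. b i * ?y i) = (\<Sum>i\<in>U. if i = a then b i else 0)" by (rule sum.cong) auto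
    also have "\<dots> = 1" using a fin by simp
    finally show ?thesis by (intro disjI2 exI[of _ ?y]) simp
  qed
next
  case (Suc l)
  have all: "\<forall>j<Suc l. P j" if "\<forall>j<l. P j" "P l" for P
    using that less_Suc_eq by auto
  from Suc.IH[of b] consider (A) d where "d\<in>vecs l" "\<forall>i\<in>U. (\<Sum>j<l. G i j * d j) = b i"
    | (B) y where "\<forall>j<l. (\<Sum>i\<in>U. G i j * y i) = 0" "(\<Sum>i\<in>U. b i * y i) = 1" by blast
  then show ?case
  proof cases
    case A
    have "d l = 0" using A(1) unfolding vecs_def by auto
    hence "\<forall>i\<in>U. (\<Sum>j<Suc l. G i j * d j) = b i" using A(2) by simp
    thus ?thesis using vecs_Suc[OF A(1)] by blast
  next
    case B
    from Suc.IH[of "\<lambda>i. b i + G i l"]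
    consider (C) d where "d\<in>vecs l" "\<forall>i\<in>U. (\<Sum>j<l. G i j * d j) = b i + G i l"
      | (D) y' where "\<forall>j<l. (\<Sum>i\<in>U. G i j * y' i) = 0" "(\<Sum>i\<in>U. (b i + G i l) * y' i) = 1"
      by blast
    then show ?thesis
    proof cases
      case C
      let ?d = "d(l := 1)"
      have "?d \<in> vecs (Suc l)" using C(1) unfolding vecs_def by auto
      moreover have "\<forall>i\<in>U. (\<Sum>j<Suc l. G i j * ?d j) = b i"
      proof
        fix i assume "i \<in> U"
        have "(\<Sum>j<l. G i j * ?d j) = (\<Sum>j<l. G i j * d j)" by (rule sum.cong) auto
        hence "(\<Sum>j<Suc l. G i j * ?d j) = (b i + G i l) + G i l" using C(2) \<open>i \<in> U\<close>
          by simp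
        thus "(\<Sum>j<Suc l. G i j * ?d j) = b i"
          by (simp only: add.assoc bit_add_self add_0_right)
      qed
      ultimately show ?thesis by blast
    next
      case D
      define \<alpha> where "\<alpha> = (\<Sum>i\<in>U. G i l * y i)"
      define \<alpha>' where "\<alpha>' = (\<Sum>i\<in>U. G i l * y' i)"
      have by': "(\<Sum>i\<in>U. b i * y' i) = 1 + \<alpha>'"
        using D(2) unfolding sum_add_mult \<alpha>'_def by (rule bit_solve)
      show ?thesis
      proof (cases "\<alpha> = 0")
        case True
        hence "(\<Sum>i\<in>U. G i l * y i) = 0" unfolding \<alpha>_def .
        hence "\<forall>j<Suc l. (\<Sum>i\<in>U. G i j * y i) = 0"
          by (rule all[where P="\<lambda>j. (\<Sum>i\<in>U. G i j * y i) = 0", OF B(1)])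
        thus ?thesis using B(2) by (intro disjI2 exI[of _ y] conjI)
      next
        case False
        hence a1: "\<alpha> = 1" using bit_not_zero_iff by blast
        show ?thesis
        proof (cases "\<alpha>' = 0")
          case True
          hence "(\<Sum>i\<in>U. b i * y' i) = 1" using by' by (simp only: add_0_right)
          moreover have "\<forall>j<Suc l. (\<Sum>i\<in>U. G i j * y' i) = 0"
            by (rule all[where P="\<lambda>j. (\<Sum>i\<in>U. G i j * y' i) = 0", OF D(1)])
               (use True in \<open>simp only: \<alpha>'_def\<close>)
          ultimately show ?thesis by (intro disjI2 exI[of _ y'] conjI)
        next
          case False
          hence a1': "\<alpha>' = 1" using bit_not_zero_iff by blast
          let ?z = "\<lambda>i. y i + y' i"
          have "\<forall>j<l. (\<Sum>i\<in>U. G i j * ?z i) = 0"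
          proof (intro allI impI)
            fix j assume "j < l"
            thus "(\<Sum>i\<in>U. G i j * ?z i) = 0" using B(1) D(1)
              by (simp only: sum_mult_add add_0_right)
          qed
          moreover have "(\<Sum>i\<in>U. G i l * ?z i) = 0"
            unfolding sum_mult_add \<alpha>_def[symmetric] \<alpha>'_def[symmetric] a1 a1' by (rule bit_add_self)
          moreover have "(\<Sum>i\<in>U. b i * ?z i) = 1"
            unfolding sum_mult_add B(2) by' a1' by (simp only: bit_add_self add_0_right)
          ultimately show ?thesis
            by (intro disjI2 exI[of _ ?z] conjI all[where P="\<lambda>j. (\<Sum>i\<in>U. G i j * ?z i) = 0"])
        qed
      qed
    qed
  qed
qed


lemma hw_le: "hw n x \<le> n"
proof -
  have "hw n x \<le> card {..<n}" unfolding hw_def by (rule card_mono) auto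
  thus ?thesis by simp
qed

lemma dmin0_le:
  assumes "x \<in> C0perp n l G0" "x \<noteq> (\<lambda>_. 0)"
  shows "dmin0 n l G0 \<le> hw n x"
proof -
  define S where "S = {hw n x | x. x \<in> C0perp n l G0 \<and> x \<noteq> (\<lambda>_. 0)}"
  have mem: "hw n x \<in> S" using assms unfolding S_def by blast
  have fin: "finite S" by (rule finite_subset[of _ "{..n}"]) (auto simp: S_def hw_le)
  have "dmin0 n l G0 = Min S" using mem unfolding dmin0_def S_def[symmetric] Let_def by auto
  thus ?thesis using Min_le[OF fin mem] by simp
qed

definition Dep :: "nat \<Rightarrow> nat \<Rightarrow> (nat \<Rightarrow> nat \<Rightarrow> bit) \<Rightarrow> nat set \<Rightarrow> bool" where
  "Dep n l G0 U \<longleftrightarrow> (\<exists>x\<in>C0perp n l G0. x \<noteq> (\<lambda>_. 0) \<and> (\<forall>i. x i \<noteq> 0 \<longrightarrow> i \<in> U))"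

lemma err_bound:
  assumes U: "U \<subseteq> {..<n}" and s: "s \<in> stucks n U" and z: "z \<in> vecs n"
    and enc: "two_step_encoder n k l G1 G0 m enc"
    and dec: "bd_decoder n k l G1 G0 t1 m dec"
    and err: "dec (read_vec n (codeword k l G1 G0 m (enc U s)) U s z) \<noteq> m"
  shows "t1 < hw n z \<or> (dmin0 n l G0 \<le> card U \<and> Dep n l G0 U \<and> t1 + dmin0 n l G0 - card U \<le> hw n z)"
proof -
  define b where "b = (\<lambda>i. mv G1 k m i + s i)"
  define d where "d = enc U s"
  define c where "c = codeword k l G1 G0 m d"
  define y where "y = read_vec n c U s z"
  define d0 where "d0 = dmin0 n l G0"
  have finU: "finite U" using U finite_subset by blast
  have encU: "d \<in> vecs l \<and>
          (if (\<exists>d'\<in>vecs l. \<forall>i\<in>U. mv G0 l d' i = b i)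
           then (\<forall>i\<in>U. mv G0 l d i = b i)
           else (\<exists>U'\<subseteq>U. card U' = d0 - 1 \<and> (\<forall>i\<in>U'. mv G0 l d i = b i)))"
    using enc U s unfolding two_step_encoder_def b_def d_def d0_def Let_def by blast
  have yv: "y \<in> vecs n" unfolding y_def read_vec_def vecs_def by auto
  have hd: "t1 < hdist n y c"
  proof (rule ccontr)
    assume "\<not> t1 < hdist n y c"
    hence "dec y = m" using dec encU yv unfolding bd_decoder_def c_def by auto
    thus False using err unfolding y_def c_def d_def by simp
  qed
  have sub: "{i. i < n \<and> y i \<noteq> c i} \<subseteq> {i. i < n \<and> z i \<noteq> 0} \<union> {i\<in>U. s i \<noteq> c i}"
  proof
    fix i assume i: "i \<in> {i. i < n \<and> y i \<noteq> c i}"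
    show "i \<in> {i. i < n \<and> z i \<noteq> 0} \<union> {i\<in>U. s i \<noteq> c i}"
    proof (cases "z i = 0")
      case True
      thus ?thesis using i unfolding y_def read_vec_def by (auto split: if_splits)
    next
      case False thus ?thesis using i by auto
    qed
  qed
  have hd_le: "hdist n y c \<le> hw n z + card {i\<in>U. s i \<noteq> c i}"
  proof -
    have "hdist n y c \<le> card ({i. i < n \<and> z i \<noteq> 0} \<union> {i\<in>U. s i \<noteq> c i})"
      unfolding hdist_def by (rule card_mono[OF _ sub]) (use finU in auto)
    also have "\<dots> \<le> hw n z + card {i\<in>U. s i \<noteq> c i}"
      unfolding hw_def by (rule card_Un_le)
    finally show ?thesis .
  qed
  have cdef: "c i = mv G1 k m i + mv G0 l d i" for i unfolding c_def codeword_def by simp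
  show ?thesis
  proof (cases "\<exists>d'\<in>vecs l. \<forall>i\<in>U. mv G0 l d' i = b i")
    case True
    hence "\<forall>i\<in>U. mv G0 l d i = b i" using encU by simp
    hence "{i\<in>U. s i \<noteq> c i} = {}" unfolding cdef b_def by auto
    hence "t1 < hw n z" using hd hd_le by (metis add_0_right card.empty order_less_le_trans)
    thus ?thesis by simp
  next
    case False
    have "\<exists>U'\<subseteq>U. card U' = d0 - 1 \<and> (\<forall>i\<in>U'. mv G0 l d i = b i)"
      using encU False by presburger
    then obtain U' where U': "U' \<subseteq> U" "card U' = d0 - 1" "\<forall>i\<in>U'. mv G0 l d i = b i"
      by blast
    have "{i\<in>U. s i \<noteq> c i} \<subseteq> U - U'" using U'(3) unfolding cdef b_def by auto
    hence "card {i\<in>U. s i \<noteq> c i} \<le> card (U - U')" by (rule card_mono[rotated]) (use finU in auto)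
    also have "\<dots> = card U - (d0 - 1)" using U' finU by (simp add: card_Diff_subset finite_subset)
    finally have c1: "card {i\<in>U. s i \<noteq> c i} \<le> card U - (d0 - 1)" .
    have nf: "\<not> (\<exists>d\<in>vecs l. \<forall>i\<in>U. (\<Sum>j<l. G0 i j * d j) = b i)"
      using False unfolding mv_def by simp
    then obtain y' where y': "\<forall>j<l. (\<Sum>i\<in>U. G0 i j * y' i) = 0" "(\<Sum>i\<in>U. b i * y' i) = 1"
      using farkas[OF finU, of l G0 b] by blast
    define x where "x = (\<lambda>i. if i \<in> U then y' i else 0)"
    have xv: "x \<in> vecs n" using U unfolding x_def vecs_def by auto
    have "(\<Sum>i<n. G0 i j * x i) = 0" if "j < l" for j
    proof -
      have "(\<Sum>i<n. G0 i j * x i) = (\<Sum>i<n. if i \<in> U then G0 i j * y' i else 0)"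
        unfolding x_def by (rule sum.cong) auto
      also have "\<dots> = (\<Sum>i\<in>{..<n} \<inter> U. G0 i j * y' i)" by (simp add: sum.inter_restrict)
      also have "{..<n} \<inter> U = U" using U by auto
      finally show ?thesis using y'(1) that by simp
    qed
    hence xC: "x \<in> C0perp n l G0" using xv unfolding C0perp_def by auto
    have xnz: "x \<noteq> (\<lambda>_. 0)"
    proof
      assume "x = (\<lambda>_. 0)"
      hence "\<forall>i\<in>U. y' i = 0" unfolding x_def by (metis)
      hence "(\<Sum>i\<in>U. b i * y' i) = 0" by simp
      thus False using y'(2) by simp
    qed
    have dep: "Dep n l G0 U" unfolding Dep_def using xC xnz by (intro bexI[of _ x]) (auto simp: x_def)
    have "d0 \<le> hw n x" unfolding d0_def by (rule dmin0_le[OF xC xnz])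
    also have "hw n x \<le> card U" unfolding hw_def
      by (rule card_mono[OF finU]) (auto simp: x_def split: if_splits)
    finally have d0U: "d0 \<le> card U" .
    have "t1 < hw n z + (card U - (d0 - 1))" using hd hd_le c1 by linarith
    hence "t1 + d0 - card U \<le> hw n z" using d0U by linarith
    thus ?thesis using dep d0U unfolding d0_def by blast
  qed
qed


lemma card_supersets:
  assumes S: "S \<subseteq> {..<n}"
  shows "card {U \<in> Pow {..<n}. card U = u \<and> S \<subseteq> U} \<le> (n - card S) choose (u - card S)"
proof -
  have finS: "finite S" using S finite_subset by blast
  have "{U \<in> Pow {..<n}. card U = u \<and> S \<subseteq> U} \<subseteq> (\<lambda>V. V \<union> S) ` {V. V \<subseteq> {..<n} - S \<and> card V = u - card S}"
  proof
    fix U assume U: "U \<in> {U \<in> Pow {..<n}. card U = u \<and> S \<subseteq> U}"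
    have finU: "finite U" using U finite_subset by auto
    have "U = (U - S) \<union> S" using U by auto
    moreover have "card (U - S) = u - card S" using U finS by (simp add: card_Diff_subset)
    ultimately show "U \<in> (\<lambda>V. V \<union> S) ` {V. V \<subseteq> {..<n} - S \<and> card V = u - card S}"
      using U by blast
  qed
  hence "card {U \<in> Pow {..<n}. card U = u \<and> S \<subseteq> U} \<le> card ((\<lambda>V. V \<union> S) ` {V. V \<subseteq> {..<n} - S \<and> card V = u - card S})"
    by (rule card_mono[rotated]) simp
  also have "\<dots> \<le> card {V. V \<subseteq> {..<n} - S \<and> card V = u - card S}" by (rule card_image_le) simp
  also have "\<dots> = card ({..<n} - S) choose (u - card S)" by (rule n_subsets) simp
  also have "card ({..<n} - S) = n - card S" using S finS by (simp add: card_Diff_subset)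
  finally show ?thesis .
qed

lemma count_dep:
  "card {U\<in>Pow {..<n}. card U = u \<and> dmin0 n l G0 \<le> card U \<and> Dep n l G0 U}
     \<le> (\<Sum>w = dmin0 n l G0..u. B0 n l G0 w * ((n - w) choose (u - w)))"
proof -
  define d0 where "d0 = dmin0 n l G0"
  define X where "X = {x\<in>C0perp n l G0. x \<noteq> (\<lambda>_. 0) \<and> hw n x \<le> u}"
  define supp where "supp x = {i. i < n \<and> x i \<noteq> 0}" for x :: "nat \<Rightarrow> bit"
  define F where "F x = {U \<in> Pow {..<n}. card U = u \<and> supp x \<subseteq> U}" for x
  have finX: "finite X" by (rule finite_subset[of _ "vecs n"]) (auto simp: X_def C0perp_def)
  have hws: "hw n x = card (supp x)" for x unfolding hw_def supp_def ..
  have "{U\<in>Pow {..<n}. card U = u \<and> d0 \<le> card U \<and> Dep n l G0 U} \<subseteq> (\<Union>x\<in>X. F x)"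
  proof
    fix U assume U: "U \<in> {U\<in>Pow {..<n}. card U = u \<and> d0 \<le> card U \<and> Dep n l G0 U}"
    then obtain x where x: "x \<in> C0perp n l G0" "x \<noteq> (\<lambda>_. 0)" "\<forall>i. x i \<noteq> 0 \<longrightarrow> i \<in> U"
      unfolding Dep_def by blast
    have "supp x \<subseteq> U" using x(3) unfolding supp_def by auto
    moreover have "hw n x \<le> u" unfolding hws using U calculation
      by (metis (mono_tags, lifting) PowD card_mono finite_lessThan finite_subset mem_Collect_eq)
    ultimately show "U \<in> (\<Union>x\<in>X. F x)" using U x unfolding X_def F_def by blast
  qed
  hence "card {U\<in>Pow {..<n}. card U = u \<and> d0 \<le> card U \<and> Dep n l G0 U} \<le> card (\<Union>x\<in>X. F x)"
    by (rule card_mono[rotated]) (auto simp: F_def finX)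
  also have "\<dots> \<le> (\<Sum>x\<in>X. card (F x))" by (rule card_UN_le[OF finX])
  also have "\<dots> \<le> (\<Sum>x\<in>X. (n - hw n x) choose (u - hw n x))"
    unfolding F_def hws by (rule sum_mono, rule card_supersets) (auto simp: supp_def)
  also have "\<dots> = (\<Sum>w\<in>{d0..u}. \<Sum>x\<in>{x\<in>X. hw n x = w}. (n - hw n x) choose (u - hw n x))"
    by (rule sum.group[symmetric]) (use finX in \<open>auto simp: X_def d0_def intro: dmin0_le\<close>)
  also have "\<dots> \<le> (\<Sum>w = d0..u. B0 n l G0 w * ((n - w) choose (u - w)))"
  proof (rule sum_mono)
    fix w
    have "(\<Sum>x\<in>{x\<in>X. hw n x = w}. (n - hw n x) choose (u - hw n x)) = card {x\<in>X. hw n x = w} * ((n - w) choose (u - w))"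
      by simp
    also have "card {x\<in>X. hw n x = w} \<le> B0 n l G0 w" unfolding B0_def
      by (rule card_mono) (auto simp: X_def intro: finite_subset[of _ "vecs n"] simp: C0perp_def)
    finally show "(\<Sum>x\<in>{x\<in>X. hw n x = w}. (n - hw n x) choose (u - hw n x)) \<le> B0 n l G0 w * ((n - w) choose (u - w))"
      by simp
  qed
  finally show ?thesis unfolding d0_def .
qed


lemma tail_sum:
  "(\<Sum>z\<in>vecs n. p ^ hw n z * (1 - p) ^ (n - hw n z) * of_bool (a \<le> hw n z))
   = (\<Sum>t = a..n. real (n choose t) * p ^ t * (1 - p) ^ (n - t))"
proof -
  have "(\<Sum>z\<in>vecs n. p ^ hw n z * (1 - p) ^ (n - hw n z) * of_bool (a \<le> hw n z))
     = (\<Sum>t\<le>n. real (n choose t) * (p ^ t * (1 - p) ^ (n - t) * of_bool (a \<le> t)))"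
    by (rule sum_vecs_hw)
  also have "\<dots> = (\<Sum>t\<in>{..n}. if a \<le> t then real (n choose t) * p ^ t * (1 - p) ^ (n - t) else 0)"
    by (rule sum.cong) auto
  also have "\<dots> = (\<Sum>t\<in>{t\<in>{..n}. a \<le> t}. real (n choose t) * p ^ t * (1 - p) ^ (n - t))"
    by (rule sum.inter_filter[symmetric]) simp
  also have "{t\<in>{..n}. a \<le> t} = {a..n}" by auto
  finally show ?thesis .
qed

lemma tail_nonneg: "0 \<le> p \<Longrightarrow> p \<le> 1 \<Longrightarrow> 0 \<le> (\<Sum>t = a..n. real (n choose t) * p ^ t * (1 - p) ^ (n - t))"
  by (intro sum_nonneg) simp

lemma per_U:
  fixes \<beta> p :: real
  assumes U: "U \<subseteq> {..<n}"
    and enc: "two_step_encoder n k l G1 G0 m enc"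
    and dec: "bd_decoder n k l G1 G0 t1 m dec"
    and b0: "0 \<le> \<beta>" "\<beta> \<le> 1" and p0: "0 \<le> p" "p \<le> 1"
  shows "(\<Sum>s\<in>stucks n U. \<Sum>z\<in>vecs n.
        \<beta> ^ card U * (1 - \<beta>) ^ (n - card U) * (1/2) ^ card U
        * p ^ hw n z * (1 - p) ^ (n - hw n z)
        * (if dec (read_vec n (codeword k l G1 G0 m (enc U s)) U s z) \<noteq> m then 1 else 0))
    \<le> \<beta> ^ card U * (1 - \<beta>) ^ (n - card U) *
       ((\<Sum>t = t1 + 1..n. real (n choose t) * p ^ t * (1 - p) ^ (n - t))
        + of_bool (dmin0 n l G0 \<le> card U \<and> Dep n l G0 U) *
          (\<Sum>t = t1 + dmin0 n l G0 - card U..n. real (n choose t) * p ^ t * (1 - p) ^ (n - t)))"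
proof -
  define w where "w = \<beta> ^ card U * (1 - \<beta>) ^ (n - card U)"
  define h :: real where "h = (1/2) ^ card U"
  define D :: real where "D = of_bool (dmin0 n l G0 \<le> card U \<and> Dep n l G0 U)"
  define a2 where "a2 = t1 + dmin0 n l G0 - card U"
  define q where "q z = p ^ hw n z * (1 - p) ^ (n - hw n z)" for z
  have w0: "0 \<le> w" unfolding w_def using b0 by simp
  have h0: "0 \<le> h" unfolding h_def by simp
  have q0: "0 \<le> q z" for z unfolding q_def using p0 by simp
  have D0: "0 \<le> D" unfolding D_def by simp
  have tm: "w * h * p ^ hw n z * (1 - p) ^ (n - hw n z)
        * (if dec (read_vec n (codeword k l G1 G0 m (enc U s)) U s z) \<noteq> m then 1 else 0)
      \<le> w * h * (q z * of_bool (t1 + 1 \<le> hw n z) + D * (q z * of_bool (a2 \<le> hw n z)))"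
    if s: "s \<in> stucks n U" and z: "z \<in> vecs n" for s z
  proof (cases "dec (read_vec n (codeword k l G1 G0 m (enc U s)) U s z) \<noteq> m")
    case True
    from err_bound[OF U s z enc dec True]
    have "1 \<le> of_bool (t1 + 1 \<le> hw n z) + D * of_bool (a2 \<le> hw n z)"
      unfolding D_def a2_def by auto
    hence "q z * 1 \<le> q z * (of_bool (t1 + 1 \<le> hw n z) + D * of_bool (a2 \<le> hw n z))"
      by (rule mult_left_mono) (rule q0)
    hence "w * h * (q z * 1) \<le> w * h * (q z * (of_bool (t1 + 1 \<le> hw n z) + D * of_bool (a2 \<le> hw n z)))"
      by (rule mult_left_mono) (use w0 h0 in simp)
    thus ?thesis using True unfolding q_def by (simp add: algebra_simps)
  next
    case False
    have "0 \<le> w * h * (q z * of_bool (t1 + 1 \<le> hw n z) + D * (q z * of_bool (a2 \<le> hw n z)))"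
      using w0 h0 q0[of z] D0 by simp
    thus ?thesis using False by simp
  qed
  define A where "A z = q z * of_bool (t1 + 1 \<le> hw n z)" for z
  define B where "B z = q z * of_bool (a2 \<le> hw n z)" for z
  have "(\<Sum>s\<in>stucks n U. \<Sum>z\<in>vecs n.
        \<beta> ^ card U * (1 - \<beta>) ^ (n - card U) * (1/2) ^ card U
        * p ^ hw n z * (1 - p) ^ (n - hw n z)
        * (if dec (read_vec n (codeword k l G1 G0 m (enc U s)) U s z) \<noteq> m then 1 else 0))
      \<le> (\<Sum>s\<in>stucks n U. \<Sum>z\<in>vecs n. w * h * (A z + D * B z))"
    unfolding w_def[symmetric] h_def[symmetric] A_def B_def
    by (intro sum_mono tm)
  also have "\<dots> = (\<Sum>s\<in>stucks n U. w * h * ((\<Sum>z\<in>vecs n. A z) + D * (\<Sum>z\<in>vecs n. B z)))"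
  proof -
    have "(\<Sum>z\<in>vecs n. w * h * (A z + D * B z)) = w * h * (\<Sum>z\<in>vecs n. A z + D * B z)"
      by (rule sum_distrib_left[symmetric])
    also have "(\<Sum>z\<in>vecs n. A z + D * B z) = (\<Sum>z\<in>vecs n. A z) + D * (\<Sum>z\<in>vecs n. B z)"
      by (simp add: sum.distrib sum_distrib_left)
    finally show ?thesis by simp
  qed
  also have "\<dots> = real (card (stucks n U)) * h * (w * ((\<Sum>z\<in>vecs n. A z) + D * (\<Sum>z\<in>vecs n. B z)))"
    by simp
  also have "real (card (stucks n U)) * h = 1"
    unfolding card_stucks[OF U] h_def by (simp add: power_mult_distrib[symmetric])
  finally show ?thesis unfolding A_def B_def q_def tail_sum w_def D_def a2_def by simp
qed


lemma sum_of_bool_card: "finite A \<Longrightarrow> (\<Sum>x\<in>A. (of_bool (P x) :: real)) = real (card {x\<in>A. P x})"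
proof -
  assume "finite A"
  hence "(\<Sum>x\<in>{x\<in>A. P x}. (1::real)) = (\<Sum>x\<in>A. if P x then 1 else 0)" by (rule sum.inter_filter)
  thus ?thesis by (simp add: of_bool_def)
qed

theorem theorem5:
  fixes n k l :: nat
    and G1 G0 :: "nat \<Rightarrow> nat \<Rightarrow> bit"
    and m :: "nat \<Rightarrow> bit"
    and enc :: "nat set \<Rightarrow> (nat \<Rightarrow> bit) \<Rightarrow> (nat \<Rightarrow> bit)"
    and dec :: "(nat \<Rightarrow> bit) \<Rightarrow> (nat \<Rightarrow> bit)"
    and \<beta> p :: real
  assumes "full_col_rank n k l G1 G0"
    and "m \<in> vecs k"
    and "0 \<le> \<beta>" "\<beta> \<le> 1" "0 \<le> p" "p \<le> 1"
    and "two_step_encoder n k l G1 G0 m enc"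
    and "bd_decoder n k l G1 G0 ((dmin1 n k l G1 G0 - 1) div 2) m dec"
  shows "error_prob n k l G1 G0 m enc dec \<beta> p \<le>
    (let d0 = dmin0 n l G0; t1 = (dmin1 n k l G1 G0 - 1) div 2 in
      (\<Sum>u = d0..n.
          real (n choose u) * \<beta> ^ u * (1 - \<beta>) ^ (n - u)
        * min ((\<Sum>w = d0..u. real (B0 n l G0 w) * real ((n - w) choose (u - w))) / real (n choose u)) 1
        * (\<Sum>t = t1 + d0 - u..n. real (n choose t) * p ^ t * (1 - p) ^ (n - t)))
      + (\<Sum>t = t1 + 1..n. real (n choose t) * p ^ t * (1 - p) ^ (n - t)))"
proof -
  note enc = assms(7) and dec = assms(8)
  define d0 where "d0 = dmin0 n l G0"
  define t1 where "t1 = (dmin1 n k l G1 G0 - 1) div 2"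
  define T1 where "T1 = (\<Sum>t = t1 + 1..n. real (n choose t) * p ^ t * (1 - p) ^ (n - t))"
  define T2 where "T2 u = (\<Sum>t = t1 + d0 - u..n. real (n choose t) * p ^ t * (1 - p) ^ (n - t))" for u
  define W where "W u = \<beta> ^ u * (1 - \<beta>) ^ (n - u)" for u
  define Dp where "Dp U = (d0 \<le> card U \<and> Dep n l G0 U)" for U
  define cnt where "cnt u = card {U\<in>Pow {..<n}. card U = u \<and> Dp U}" for u
  define S where "S u = (\<Sum>w = d0..u. real (B0 n l G0 w) * real ((n - w) choose (u - w)))" for u
  have W0: "0 \<le> W u" for u unfolding W_def using assms(3,4) by simp
  have T20: "0 \<le> T2 u" for u unfolding T2_def by (rule tail_nonneg) (use assms(5,6) in auto)
  have "error_prob n k l G1 G0 m enc dec \<beta> p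
      \<le> (\<Sum>U\<in>Pow {..<n}. W (card U) * (T1 + of_bool (Dp U) * T2 (card U)))"
    unfolding error_prob_def
  proof (rule sum_mono)
    fix U assume "U \<in> Pow {..<n}"
    hence U: "U \<subseteq> {..<n}" by simp
    show "(\<Sum>s\<in>stucks n U. \<Sum>z\<in>vecs n.
        \<beta> ^ card U * (1 - \<beta>) ^ (n - card U) * (1/2) ^ card U
        * p ^ hw n z * (1 - p) ^ (n - hw n z)
        * (if dec (read_vec n (codeword k l G1 G0 m (enc U s)) U s z) \<noteq> m then 1 else 0))
      \<le> W (card U) * (T1 + of_bool (Dp U) * T2 (card U))"
      using per_U[OF U enc dec assms(3-6)] unfolding W_def T1_def T2_def Dp_def d0_def t1_def .
  qed
  also have "\<dots> = T1 * (\<Sum>U\<in>Pow {..<n}. W (card U)) + (\<Sum>U\<in>Pow {..<n}. W (card U) * T2 (card U) * of_bool (Dp U))"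
    by (simp add: algebra_simps sum.distrib sum_distrib_left)
  also have "(\<Sum>U\<in>Pow {..<n}. W (card U)) = 1"
  proof -
    have "(\<Sum>U\<in>Pow {..<n}. W (card U)) = (\<Sum>u\<le>n. real (n choose u) * W u)"
      by (subst sum_Pow_card) auto
    also have "\<dots> = (\<beta> + (1 - \<beta>)) ^ n" unfolding binomial_ring W_def by (simp add: mult.assoc)
    finally show ?thesis by simp
  qed
  also have "(\<Sum>U\<in>Pow {..<n}. W (card U) * T2 (card U) * of_bool (Dp U)) = (\<Sum>u\<le>n. W u * T2 u * real (cnt u))"
  proof -
    have "(\<Sum>U\<in>Pow {..<n}. W (card U) * T2 (card U) * of_bool (Dp U))
        = (\<Sum>u\<in>{..n}. \<Sum>U\<in>{U\<in>Pow {..<n}. card U = u}. W (card U) * T2 (card U) * of_bool (Dp U))"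
      by (rule sum.group[symmetric]) (auto intro: card_mono[of "{..<n}", simplified])
    also have "\<dots> = (\<Sum>u\<le>n. W u * T2 u * real (cnt u))"
    proof (rule sum.cong[OF refl])
      fix u
      have "(\<Sum>U\<in>{U\<in>Pow {..<n}. card U = u}. W (card U) * T2 (card U) * of_bool (Dp U))
          = (\<Sum>U\<in>{U\<in>Pow {..<n}. card U = u}. W u * T2 u * of_bool (Dp U))" by (rule sum.cong) auto
      also have "\<dots> = W u * T2 u * (\<Sum>U\<in>{U\<in>Pow {..<n}. card U = u}. of_bool (Dp U))"
        by (simp add: sum_distrib_left)
      also have "(\<Sum>U\<in>{U\<in>Pow {..<n}. card U = u}. (of_bool (Dp U) :: real)) = real (cnt u)"
        unfolding cnt_def by (subst sum_of_bool_card) (auto intro: arg_cong[where f="\<lambda>X. real (card X)"])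
      finally show "(\<Sum>U\<in>{U\<in>Pow {..<n}. card U = u}. W (card U) * T2 (card U) * of_bool (Dp U)) = W u * T2 u * real (cnt u)" .
    qed
    finally show ?thesis .
  qed
  also have "(\<Sum>u\<le>n. W u * T2 u * real (cnt u)) = (\<Sum>u = d0..n. W u * T2 u * real (cnt u))"
  proof (rule sum.mono_neutral_right)
    show "\<forall>u\<in>{..n} - {d0..n}. W u * T2 u * real (cnt u) = 0"
    proof
      fix u assume "u \<in> {..n} - {d0..n}"
      hence "u < d0" by auto
      hence "{U\<in>Pow {..<n}. card U = u \<and> Dp U} = {}" unfolding Dp_def by auto
      thus "W u * T2 u * real (cnt u) = 0" unfolding cnt_def by simp
    qed
  qed auto
  also have "(\<Sum>u = d0..n. W u * T2 u * real (cnt u))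
      \<le> (\<Sum>u = d0..n. real (n choose u) * \<beta> ^ u * (1 - \<beta>) ^ (n - u) * min (S u / real (n choose u)) 1 * T2 u)"
  proof (rule sum_mono)
    fix u assume u: "u \<in> {d0..n}"
    have Cpos: "0 < real (n choose u)" using u by simp
    have c1: "real (cnt u) \<le> S u"
    proof -
      have "cnt u \<le> (\<Sum>w = d0..u. B0 n l G0 w * ((n - w) choose (u - w)))"
        unfolding cnt_def Dp_def d0_def using count_dep[of n u l G0] by (simp add: conj_commute conj_left_commute)
      hence "real (cnt u) \<le> real (\<Sum>w = d0..u. B0 n l G0 w * ((n - w) choose (u - w)))" by (rule of_nat_mono)
      thus ?thesis unfolding S_def by simp
    qed
    have c2: "real (cnt u) \<le> real (n choose u)"
    proof -
      have "cnt u \<le> card {U. U \<subseteq> {..<n} \<and> card U = u}" unfolding cnt_def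
        by (rule card_mono) auto
      also have "\<dots> = n choose u" using n_subsets[of "{..<n}" u] by simp
      finally show ?thesis by simp
    qed
    have "real (cnt u) \<le> real (n choose u) * min (S u / real (n choose u)) 1"
    proof (cases "S u / real (n choose u) \<le> 1")
      case True
      thus ?thesis using c1 Cpos by simp
    next
      case False
      thus ?thesis using c2 by simp
    qed
    hence "W u * T2 u * real (cnt u) \<le> W u * T2 u * (real (n choose u) * min (S u / real (n choose u)) 1)"
      by (rule mult_left_mono) (simp add: W0 T20)
    thus "W u * T2 u * real (cnt u) \<le> real (n choose u) * \<beta> ^ u * (1 - \<beta>) ^ (n - u) * min (S u / real (n choose u)) 1 * T2 u"
      unfolding W_def by (simp add: algebra_simps)
  qed
  finally show ?thesis unfolding Let_def S_def T2_def T1_def d0_def t1_def by simp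
qed

end
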